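(* Let $N,K,L,T$ be positive integers with $N\ge K+1$, and let $\tau\in\{0,1,\dots,L-1\}$ be an integer timing offset and $\delta_f\in\mathbb{R}$ a (normalized) carrier frequency offset. Consider the noiseless received signal $$\boldsymbol{y}(t)=e^{j2\pi\delta_f t}\,\boldsymbol{h}\,s(t-\tau)+\sum_{k=1}^{K}\boldsymbol{g}_k\, i_k(t)\in\mathbb{C}^N,\qquad t\in\mathbb{Z},$$ where $\boldsymbol{h},\boldsymbol{g}_1,\dots,\boldsymbol{g}_K\in\mathbb{C}^N$ are linearly independent (deterministic, unknown) vectors, and the scalar sequences $s(t)$ and $i_1(t),\dots,i_K(t)$ are random processes that are statistically independent of one another. The values $s(1),\dots,s(T)$ (the preamble) are known to the receiver. For $\omega\in\mathbb{R}$ and $\boldsymbol{w}=[\boldsymbol{w}_0^H,\dots,\boldsymbol{w}_{L-1}^H]^H\in\mathbb{C}^{NL}$ (each $\boldsymbol{w}_l\in\mathbb{C}^N$) define $$F(\omega,\boldsymbol{w})=\sum_{t=1}^{T}\Big|s(t)-\sum_{l=0}^{L-1}e^{-j2\pi\omega(t+l)}\boldsymbol{w}_l^H\boldsymbol{y}(t+l)\Big|^2 .$$ Let $\Omega\subset\mathbb{R}$ be a search set containing $\delta_f$ such that no two distinct elements of $\Omega$ differ by an integer. If $T>(K+1)L$, then with probability one the minimum of $F$ over $\Omega\times\mathbb{C}^{NL}$ equals $0$, and every pair $(\omega^\star,\boldsymbol{w}^\star)\in\Omega\times\mathbb{C}^{NL}$ with $F(\omega^\star,\boldsymbol{w}^\star)=0$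 satisfies $\omega^\star=\delta_f$ and $\boldsymbol{w}^\star\in\mathcal{C}$, where $$\mathcal{C}=\Big\{\boldsymbol{w}=(\boldsymbol{w}_l)_{l=0}^{L-1}:\ \boldsymbol{h}^H\boldsymbol{w}_\tau=1,\ \boldsymbol{h}^H\boldsymbol{w}_l=0\ \forall l\ne\tau,\ \boldsymbol{g}_k^H\boldsymbol{w}_l=0\ \forall l\in\{0,\dots,L-1\},\ \forall k\in\{1,\dots,K\}\Big\}.$$
   Context: Setting: a single-antenna transmitter sends a digitally modulated baseband signal $s(t)$ to an $N$-antenna receiver in the presence of $K$ jamming signals $i_k(t)$; time $t$ is measured in sampling intervals. $(\cdot)^H$ denotes conjugate transpose. Equivalently, with $\vec{\boldsymbol{y}}_\omega(t)=[e^{j2\pi\omega t}\boldsymbol{y}^H(t),\dots,e^{j2\pi\omega(t+L-1)}\boldsymbol{y}^H(t+L-1)]^H\in\mathbb{C}^{NL}$, $\boldsymbol{A}_\omega\in\mathbb{C}^{T\times NL}$ the matrix whose $t$-th row is $\vec{\boldsymbol{y}}_\omega^H(t)$, and $\tilde{\boldsymbol{s}}=[s(1),\dots,s(T)]^H$, one has $F(\omega,\boldsymbol{w})=\|\tilde{\boldsymbol{s}}-\boldsymbol{A}_\omega\boldsymbol{w}\|_2^2$. The values $s(t)$ for $t\le 0$ or $t>T$ are unknown data symbols (also random, independent of the jammers). The randomness assumption is used in the sense that the signal samples are generic (e.g., the signals have jointly continuous distributions), so that "with probability one" statements about full-rank data matrices apply. A filter $\boldsymbol{w}\in\mathcal{C}$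 used with $\omega=\delta_f$ outputs exactly $s(t)$ in the noiseless case, i.e. it cancels all jammers and compensates the timing and frequency offsets. *)

theory Defs
  imports "HOL-Probability.Probability"
begin

definition hinner :: "complex ^ 'n \<Rightarrow> complex ^ 'n \<Rightarrow> complex" where
  "hinner v u = (\<Sum>i\<in>UNIV. cnj (v $ i) * u $ i)"

definition cindep_family :: "(nat \<Rightarrow> complex ^ 'n) \<Rightarrow> nat \<Rightarrow> bool" where
  "cindep_family v K \<longleftrightarrow>
     (\<forall>c :: nat \<Rightarrow> complex. (\<Sum>k\<in>{0..K}. c k *s v k) = 0 \<longrightarrow> (\<forall>k\<in>{0..K}. c k = 0))"

definition rx :: "(int \<Rightarrow> complex) \<Rightarrow> (nat \<Rightarrow> int \<Rightarrow> complex) \<Rightarrow> complex ^ 'n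
      \<Rightarrow> (nat \<Rightarrow> complex ^ 'n) \<Rightarrow> nat \<Rightarrow> nat \<Rightarrow> real \<Rightarrow> int \<Rightarrow> complex ^ 'n" where
  "rx s i h g K tau df t =
     (exp (\<i> * complex_of_real (2 * pi * df * of_int t)) * s (t - int tau)) *s h
     + (\<Sum>k\<in>{1..K}. i k t *s g k)"

(* cost F(omega, w) ; w l is the l-th block w_l, l = 0..L-1 *)
definition costF :: "(int \<Rightarrow> complex) \<Rightarrow> (int \<Rightarrow> complex ^ 'n) \<Rightarrow> nat \<Rightarrow> nat
      \<Rightarrow> real \<Rightarrow> (nat \<Rightarrow> complex ^ 'n) \<Rightarrow> real" where
  "costF s y L T om w =
     (\<Sum>t\<in>{1..int T}. (cmod (s t - (\<Sum>l<L.
         exp (- \<i> * complex_of_real (2 * pi * om * of_int (t + int l))) * hinner (w l) (y (t + int l)))))\<^sup>2)"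

definition goodC :: "complex ^ 'n \<Rightarrow> (nat \<Rightarrow> complex ^ 'n) \<Rightarrow> nat \<Rightarrow> nat \<Rightarrow> nat
      \<Rightarrow> (nat \<Rightarrow> complex ^ 'n) set" where
  "goodC h g K L tau = {w. hinner h (w tau) = 1
       \<and> (\<forall>l<L. l \<noteq> tau \<longrightarrow> hinner h (w l) = 0)
       \<and> (\<forall>l<L. \<forall>k\<in>{1..K}. hinner (g k) (w l) = 0)}"

definition proc :: "('w \<Rightarrow> int \<Rightarrow> complex) \<Rightarrow> ('w \<Rightarrow> nat \<Rightarrow> int \<Rightarrow> complex)
      \<Rightarrow> 'w \<Rightarrow> nat \<Rightarrow> int \<Rightarrow> complex" where
  "proc S I x k = (if k = 0 then S x else I x k)"

(* genericity: every finite collection of samples has a jointly continuous law,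
   i.e. one absolutely continuous w.r.t. Lebesgue measure on C^J *)
definition jointly_continuous :: "'w measure \<Rightarrow> ('w \<Rightarrow> nat \<Rightarrow> int \<Rightarrow> complex) \<Rightarrow> nat set \<Rightarrow> bool" where
  "jointly_continuous M X Ks \<longleftrightarrow>
     (\<forall>J. finite J \<longrightarrow> J \<subseteq> Ks \<times> UNIV \<longrightarrow>
        absolutely_continuous (PiM J (\<lambda>_. lborel :: complex measure))
          (distr M (PiM J (\<lambda>_. borel :: complex measure)) (\<lambda>x. \<lambda>j\<in>J. X x (fst j) (snd j))))"

end

theory Submission
  imports Defs "Jordan_Normal_Form.Determinant"
begin

definition AM :: "nat \<Rightarrow> (nat \<Rightarrow> nat \<Rightarrow> real \<Rightarrow> complex) \<Rightarrow> (nat \<Rightarrow> nat \<Rightarrow> 'i)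
    \<Rightarrow> ('i \<Rightarrow> complex) \<Rightarrow> real \<Rightarrow> complex mat" where
  "AM n al u y th = Matrix.mat n n (\<lambda>(i,j). al i j th * y (u i j))"

lemma AM_carrier[simp]: "AM n al u y th \<in> carrier_mat n n"
  unfolding AM_def by simp

lemma AM_dims[simp]: "dim_row (AM n al u y th) = n" "dim_col (AM n al u y th) = n"
  unfolding AM_def by simp_all

lemma AM_index[simp]: "i < n \<Longrightarrow> j < n \<Longrightarrow> AM n al u y th $$ (i,j) = al i j th * y (u i j)"
  unfolding AM_def by simp

lemma det_AM: "Determinant.det (AM n al u y th) =
   (\<Sum>p\<in>{p. p permutes {0..<n}}. signof p * (\<Prod>i = 0..<n. al i (p i) th * y (u i (p i))))"
  unfolding Determinant.det_def
  by (auto intro!: sum.cong arg_cong2[where f="(*)"] prod.cong simp: AM_def permutes_in_image)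

lemma differentiable_prod':
  fixes f :: "'b \<Rightarrow> real \<Rightarrow> complex"
  assumes "finite I" "\<And>i. i \<in> I \<Longrightarrow> f i differentiable (at x within S)"
  shows "(\<lambda>t. \<Prod>i\<in>I. f i t) differentiable (at x within S)"
  using assms
proof (induction I rule: finite_induct)
  case empty then show ?case by simp
next
  case (insert a F)
  then show ?case by (simp add: differentiable_mult)
qed

lemma det_AM_differentiable:
  assumes "\<And>i j. (\<lambda>th. al i j th) differentiable (at x within S)"
  shows "(\<lambda>th. Determinant.det (AM n al u y th)) differentiable (at x within S)"
  unfolding det_AM
  by (intro differentiable_sum ballI differentiable_mult differentiable_const differentiable_prod' assms)
     (auto simp: finite_permutations)

lemma det_AM_measurable:
  assumes "\<And>i j. i < n \<Longrightarrow> j < n \<Longrightarrow> u i j \<in> J"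
  shows "(\<lambda>y. Determinant.det (AM n al u y th)) \<in> borel_measurable (PiM J (\<lambda>_. lborel))"
proof -
  have c: "(\<lambda>y. al i (p i) th * y (u i (p i))) \<in> borel_measurable (PiM J (\<lambda>_. lborel))"
    if p: "p \<in> {p. p permutes {0..<n}}" and i: "i \<in> {0..<n}" for p i
  proof -
    have "p i < n" using p i by (auto simp: permutes_in_image)
    then have "u i (p i) \<in> J" using assms i by auto
    then have "(\<lambda>y. y (u i (p i))) \<in> measurable (PiM J (\<lambda>_. lborel)) lborel"
      by (rule measurable_component_singleton)
    then show ?thesis
      by (intro borel_measurable_times borel_measurable_const) (simp add: measurable_lborel2)
  qed
  show ?thesis unfolding det_AM
    by (intro borel_measurable_sum borel_measurable_times borel_measurable_const borel_measurable_prod c)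
qed

definition badset :: "'i set \<Rightarrow> nat \<Rightarrow> (nat \<Rightarrow> nat \<Rightarrow> real \<Rightarrow> complex) \<Rightarrow> (nat \<Rightarrow> nat \<Rightarrow> 'i)
    \<Rightarrow> ('i \<Rightarrow> complex) set" where
  "badset J n al u = {y \<in> space (PiM J (\<lambda>_. lborel)).
      \<exists>th\<in>{0<..<1::real}. Determinant.det (AM n al u y th) = 0}"

lemma exists_zero_iff:
  fixes g :: "real \<Rightarrow> complex"
  assumes cont: "\<And>x. isCont g x"
  shows "(\<exists>th\<in>{0<..<1}. g th = 0) \<longleftrightarrow>
    (\<exists>m::nat. \<forall>k::nat. \<exists>q::rat. real_of_rat q \<in> {1/(real m+3)..1-1/(real m+3)}
        \<and> cmod (g (real_of_rat q)) < 1/real (Suc k))"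
proof
  assume "\<exists>th\<in>{0<..<1}. g th = 0"
  then obtain th where th: "0 < th" "th < 1" "g th = 0" by auto
  have "0 < min th (1-th)" using th by auto
  then obtain m where m: "m > 0" "inverse (real m) < min th (1-th)"
    using ex_inverse_of_nat_less by blast
  have "1/(real m+3) \<le> inverse (real m)" using m(1) by (simp add: field_simps)
  then have lo: "1/(real m+3) < th" and hi: "th < 1-1/(real m+3)" using m(2) by auto
  show "\<exists>m::nat. \<forall>k::nat. \<exists>q::rat. real_of_rat q \<in> {1/(real m+3)..1-1/(real m+3)}
        \<and> cmod (g (real_of_rat q)) < 1/real (Suc k)"
  proof (intro exI[of _ m] allI)
    fix k :: nat
    have e: "0 < 1/real (Suc k)" by simp
    from cont[of th, unfolded continuous_at_eps_delta] e
    obtain d where d: "d > 0" "\<And>x'. dist x' th < d \<Longrightarrow> dist (g x') (g th) < 1/real (Suc k)"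
      by blast
    have "max (1/(real m+3)) (th - d) < min (1-1/(real m+3)) (th + d)"
      using lo hi d by auto
    then obtain r where r: "r \<in> \<rat>" "max (1/(real m+3)) (th - d) < r" "r < min (1-1/(real m+3)) (th + d)"
      using Rats_dense_in_real by blast
    from r(1) obtain q where q: "r = real_of_rat q" by (auto elim: Rats_cases)
    have "dist r th < d" using r by (auto simp: dist_real_def)
    then have "cmod (g r) < 1/real (Suc k)" using d(2)[of r] th(3) by (simp add: dist_norm)
    then show "\<exists>q::rat. real_of_rat q \<in> {1/(real m+3)..1-1/(real m+3)}
        \<and> cmod (g (real_of_rat q)) < 1/real (Suc k)"
      using r q by (intro exI[of _ q]) auto
  qed
next
  assume "\<exists>m::nat. \<forall>k::nat. \<exists>q::rat. real_of_rat q \<in> {1/(real m+3)..1-1/(real m+3)}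
        \<and> cmod (g (real_of_rat q)) < 1/real (Suc k)"
  then obtain m where m: "\<And>k::nat. \<exists>q::rat. real_of_rat q \<in> {1/(real m+3)..1-1/(real m+3)}
        \<and> cmod (g (real_of_rat q)) < 1/real (Suc k)" by blast
  define S where "S = {1/(real m+3)..1-1/(real m+3)}"
  have "1/(real m+3) \<le> 1/3" by (simp add: field_simps)
  then have Sne: "S \<noteq> {}" unfolding S_def by auto
  have "continuous_on S (\<lambda>x. cmod (g x))"
    by (intro continuous_at_imp_continuous_on ballI continuous_norm cont)
  then obtain x0 where x0: "x0 \<in> S" "\<And>y. y \<in> S \<Longrightarrow> cmod (g x0) \<le> cmod (g y)"
    using continuous_attains_inf[OF compact_Icc[of "1/(real m+3)" "1-1/(real m+3)", folded S_def] Sne]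
    by blast
  have "cmod (g x0) = 0"
  proof (rule ccontr)
    assume "cmod (g x0) \<noteq> 0"
    then have "cmod (g x0) > 0" by simp
    then obtain n where n: "n > 0" "inverse (real n) < cmod (g x0)"
      using ex_inverse_of_nat_less by blast
    obtain q where q: "real_of_rat q \<in> S" "cmod (g (real_of_rat q)) < 1/real (Suc (n - 1))"
      using m[of "n - 1"] unfolding S_def by blast
    have "1/real (Suc (n - 1)) = inverse (real n)" using n(1) by (simp add: field_simps)
    then have "cmod (g (real_of_rat q)) < cmod (g x0)" using q(2) n(2) by linarith
    with x0(2)[OF q(1)] show False by simp
  qed
  moreover have "x0 \<in> {0<..<1}"
  proof -
    have a: "0 < 1/(real m+3)" by simp
    have b: "1/(real m+3) \<le> x0" "x0 \<le> 1 - 1/(real m+3)" using x0(1) unfolding S_def by auto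
    show ?thesis unfolding greaterThanLessThan_iff using a b by linarith
  qed
  ultimately show "\<exists>th\<in>{0<..<1}. g th = 0" by auto
qed

lemma badset_sets:
  assumes uJ: "\<And>i j. i < n \<Longrightarrow> j < n \<Longrightarrow> u i j \<in> J"
    and dif: "\<And>i j x. (\<lambda>th. al i j th) differentiable (at x)"
  shows "badset J n al u \<in> sets (PiM J (\<lambda>_. lborel))"
proof -
  have cont: "isCont (\<lambda>th. Determinant.det (AM n al u y th)) x" for y x
    by (intro differentiable_imp_continuous_within det_AM_differentiable dif)
  have eq: "badset J n al u = {y \<in> space (PiM J (\<lambda>_. lborel)).
      \<exists>m::nat. \<forall>k::nat. \<exists>q::rat. real_of_rat q \<in> {1/(real m+3)..1-1/(real m+3)}
        \<and> cmod (Determinant.det (AM n al u y (real_of_rat q))) < 1/real (Suc k)}"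
    unfolding badset_def using exists_zero_iff[OF cont] by blast
  have meas: "(\<lambda>y. Determinant.det (AM n al u y th)) \<in> borel_measurable (PiM J (\<lambda>_. lborel))" for th
    by (rule det_AM_measurable[OF uJ])
  have "Measurable.pred (PiM J (\<lambda>_. lborel)) (\<lambda>y.
      \<exists>m::nat. \<forall>k::nat. \<exists>q::rat. real_of_rat q \<in> {1/(real m+3)..1-1/(real m+3)}
        \<and> cmod (Determinant.det (AM n al u y (real_of_rat q))) < 1/real (Suc k))"
  proof (intro pred_intros_countable pred_intros_logic)
    fix m k q
    show "Measurable.pred (PiM J (\<lambda>_. lborel)) (\<lambda>y. real_of_rat q \<in> {1/(real m+3)..1-1/(real m+3)})"
      by simp
    show "Measurable.pred (PiM J (\<lambda>_. lborel))
        (\<lambda>y. cmod (Determinant.det (AM n al u y (real_of_rat q))) < 1/real (Suc k))"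
      using meas by measurable
  qed
  then show ?thesis unfolding eq pred_def .
qed

lemma AM_upd_eq:
  assumes "i < Suc n" "j < Suc n" "(i,j) \<noteq> (n,n)"
    and fresh: "\<And>i j. i \<le> n \<Longrightarrow> j \<le> n \<Longrightarrow> (i,j) \<noteq> (n,n) \<Longrightarrow> u i j \<noteq> u n n"
  shows "AM (Suc n) al u (y(u n n := Z)) th $$ (i,j) = AM (Suc n) al u y th $$ (i,j)"
  using assms fresh[of i j] by simp

lemma key_identity:
  assumes fresh: "\<And>i j. i \<le> n \<Longrightarrow> j \<le> n \<Longrightarrow> (i,j) \<noteq> (n,n) \<Longrightarrow> u i j \<noteq> u n n"
  shows "Determinant.det (AM (Suc n) al u (y(u n n := Z)) th) =
         Determinant.det (AM (Suc n) al u (y(u n n := 0)) th) + Z * (al n n th * Determinant.det (AM n al u y th))"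
proof -
  define z where "z = u n n"
  let ?A = "\<lambda>Z. AM (Suc n) al u (y(z := Z)) th"
  let ?B = "AM (Suc n) al u y th"
  have off: "?A Z' $$ (i,j) = ?B $$ (i,j)" if "i < Suc n" "j < Suc n" "(i,j) \<noteq> (n,n)" for Z' i j
    unfolding z_def using that fresh[of i j] by simp
  have del: "mat_delete (?A Z') n j = mat_delete ?B n j" for Z' j
  proof (rule eq_matI)
    fix i' j' assume "i' < dim_row (mat_delete ?B n j)" "j' < dim_col (mat_delete ?B n j)"
    then have i': "i' < n" and j': "j' < n" by auto
    show "mat_delete (?A Z') n j $$ (i', j') = mat_delete ?B n j $$ (i', j')"
      unfolding mat_delete_def using i' j' off[of i' "if j' < j then j' else Suc j'" Z'] by auto
  qed auto
  have delnn: "mat_delete ?B n n = AM n al u y th"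
  proof (rule eq_matI)
    fix i' j' assume "i' < dim_row (AM n al u y th)" "j' < dim_col (AM n al u y th)"
    then have i': "i' < n" and j': "j' < n" by auto
    show "mat_delete ?B n n $$ (i', j') = AM n al u y th $$ (i', j')"
      unfolding mat_delete_def using i' j' by auto
  qed auto
  have sgn: "(-1::complex) ^ (n + n) = 1" by (simp add: mult_2[symmetric] power_mult)
  have expand: "Determinant.det (?A Z') =
      (\<Sum>j<n. ?B $$ (n,j) * cofactor ?B n j) + Z' * (al n n th * Determinant.det (AM n al u y th))" for Z'
  proof -
    have "Determinant.det (?A Z') = (\<Sum>j<Suc n. ?A Z' $$ (n,j) * cofactor (?A Z') n j)"
      by (rule laplace_expansion_row[OF AM_carrier]) simp
    also have "\<dots> = (\<Sum>j<n. ?A Z' $$ (n,j) * cofactor (?A Z') n j) + ?A Z' $$ (n,n) * cofactor (?A Z') n n"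
      by simp
    also have "(\<Sum>j<n. ?A Z' $$ (n,j) * cofactor (?A Z') n j) = (\<Sum>j<n. ?B $$ (n,j) * cofactor ?B n j)"
    proof (intro sum.cong refl)
      fix j assume "j \<in> {..<n}"
      then have j: "j < n" by simp
      have "?A Z' $$ (n,j) = ?B $$ (n,j)" using j by (intro off) auto
      then show "?A Z' $$ (n,j) * cofactor (?A Z') n j = ?B $$ (n,j) * cofactor ?B n j"
        by (simp only: cofactor_def del)
    qed
    also have "?A Z' $$ (n,n) * cofactor (?A Z') n n = Z' * (al n n th * Determinant.det (AM n al u y th))"
      unfolding cofactor_def del delnn by (simp add: sgn z_def)
    finally show ?thesis .
  qed
  show ?thesis unfolding z_def[symmetric] using expand[of Z] expand[of 0] by simp
qed

lemma product_sigma_finite_lborel: "product_sigma_finite (\<lambda>_::'i. lborel :: complex measure)"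
  unfolding product_sigma_finite_def by (simp add: sigma_finite_lborel)

lemma null_lborel_negligible:
  fixes S :: "complex set"
  assumes "S \<in> sets lborel" "negligible S"
  shows "S \<in> null_sets lborel"
  using assms null_sets_completion_iff[of S lborel] negligible_iff_null_sets by blast

lemma step:
  fixes al :: "nat \<Rightarrow> nat \<Rightarrow> real \<Rightarrow> complex" and u :: "nat \<Rightarrow> nat \<Rightarrow> 'i"
  assumes finJ: "finite J"
    and uJ: "\<And>i j. i \<le> n \<Longrightarrow> j \<le> n \<Longrightarrow> u i j \<in> J"
    and fresh: "\<And>i j. i \<le> n \<Longrightarrow> j \<le> n \<Longrightarrow> (i,j) \<noteq> (n,n) \<Longrightarrow> u i j \<noteq> u n n"
    and anz: "\<And>th. al n n th \<noteq> 0"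
    and dif: "\<And>i j x. (\<lambda>th. al i j th) differentiable (at x)"
    and IH: "badset (J - {u n n}) n al u \<in> null_sets (PiM (J - {u n n}) (\<lambda>_. lborel))"
  shows "badset J (Suc n) al u \<in> null_sets (PiM J (\<lambda>_. lborel))"
proof -
  have dif': "(\<lambda>th. al i j th) differentiable (at x within S)" for i j x S
    using dif by (rule differentiable_at_withinI)
  define z where "z = u n n"
  define I where "I = J - {z}"
  have zJ: "z \<in> J" unfolding z_def using uJ by auto
  have JI: "J = insert z I" "z \<notin> I" "finite I" using zJ finJ unfolding I_def by auto
  let ?M = "\<lambda>_::'i. lborel :: complex measure"
  interpret psf: product_sigma_finite ?M by (rule product_sigma_finite_lborel)
  define Bd where "Bd = badset J (Suc n) al u"
  have Bd_sets: "Bd \<in> sets (PiM J ?M)"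
    unfolding Bd_def by (rule badset_sets) (auto intro: uJ dif)
  have "emeasure (PiM J ?M) Bd = (\<integral>\<^sup>+ y. indicator Bd y \<partial>PiM J ?M)"
    using Bd_sets by simp
  also have "\<dots> = (\<integral>\<^sup>+ x. (\<integral>\<^sup>+ Z. indicator Bd (x(z := Z)) \<partial>lborel) \<partial>PiM I ?M)"
    unfolding JI(1) using JI Bd_sets
    by (intro psf.product_nn_integral_insert) auto
  also have "\<dots> = (\<integral>\<^sup>+ x. 0 \<partial>PiM I ?M)"
  proof (rule nn_integral_cong_AE)
    have ae1: "AE x in PiM I ?M. x \<notin> badset I n al u"
      using IH unfolding I_def z_def by (rule AE_not_in)
    have ae2: "AE x in PiM I ?M. x \<in> space (PiM I ?M)" by (rule AE_space)
    show "AE x in PiM I ?M. (\<integral>\<^sup>+ Z. indicator Bd (x(z := Z)) \<partial>lborel) = 0"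
      using ae1 ae2
    proof eventually_elim
      case (elim x)
      then have xs: "x \<in> space (PiM I ?M)" and xn: "x \<notin> badset I n al u" by auto
      have m0: "Determinant.det (AM n al u x th) \<noteq> 0" if "th \<in> {0<..<1}" for th
        using xn xs that unfolding badset_def by auto
      define Sec where "Sec = {Z. x(z := Z) \<in> Bd}"
      have upd_meas: "(\<lambda>Z. x(z := Z)) \<in> measurable lborel (PiM J ?M)"
        unfolding JI(1) using measurable_component_update[OF xs JI(2)] by simp
      have Sec_sets: "Sec \<in> sets lborel"
      proof -
        have "Sec = (\<lambda>Z. x(z := Z)) -` Bd \<inter> space lborel" unfolding Sec_def by auto
        then show ?thesis using measurable_sets[OF upd_meas Bd_sets] by simp
      qed
      define f where "f th = - Determinant.det (AM (Suc n) al u (x(z := 0)) th) /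
                         (al n n th * Determinant.det (AM n al u x th))" for th
      have Sec_sub: "Sec \<subseteq> f ` {0<..<1}"
      proof
        fix Z assume "Z \<in> Sec"
        then obtain th where th: "th \<in> {0<..<1}" "Determinant.det (AM (Suc n) al u (x(z := Z)) th) = 0"
          unfolding Sec_def Bd_def badset_def by auto
        have h: "Determinant.det (AM (Suc n) al u (x(z := 0)) th) + Z * (al n n th * Determinant.det (AM n al u x th)) = 0"
          using th(2) key_identity[where n=n and u=u and al=al and y=x and Z=Z and th=th, OF fresh] unfolding z_def by simp
        have c: "al n n th * Determinant.det (AM n al u x th) \<noteq> 0"
          using anz m0[OF th(1)] by simp
        from h have "Z * (al n n th * Determinant.det (AM n al u x th)) = - Determinant.det (AM (Suc n) al u (x(z := 0)) th)"
          by (simp add: eq_neg_iff_add_eq_0 add.commute)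
        then have "Z = f th" unfolding f_def using c by (simp add: field_simps)
        then show "Z \<in> f ` {0<..<1}" using th(1) by auto
      qed
      have fdiff: "f differentiable_on {0<..<1}"
        unfolding differentiable_on_def
      proof
        fix th :: real assume th: "th \<in> {0<..<1}"
        show "f differentiable (at th within {0<..<1})"
          unfolding f_def
          using anz m0[OF th]
          by (intro differentiable_divide differentiable_minus differentiable_mult det_AM_differentiable
                dif') auto
      qed
      have "negligible (f ` {0<..<1})"
        by (rule negligible_differentiable_image_lowdim[OF _ fdiff]) simp
      then have "negligible Sec" using Sec_sub negligible_subset by blast
      then have nul: "Sec \<in> null_sets lborel" using Sec_sets null_lborel_negligible by blast
      have eqi: "(\<integral>\<^sup>+ Z. indicator Bd (x(z := Z)) \<partial>lborel) = (\<integral>\<^sup>+ Z. indicator Sec Z \<partial>lborel)"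
        unfolding Sec_def by (intro nn_integral_cong) (auto simp: indicator_def)
      show "(\<integral>\<^sup>+ Z. indicator Bd (x(z := Z)) \<partial>lborel) = 0"
        unfolding eqi using Sec_sets nul by (simp add: null_setsD1)
    qed
  qed
  also have "\<dots> = 0" by simp
  finally show ?thesis using Bd_sets unfolding Bd_def by auto
qed

lemma hyperplane_null:
  assumes "finite J" "a \<in> J"
  shows "{y \<in> space (PiM J (\<lambda>_. lborel::complex measure)). y a = 0} \<in> null_sets (PiM J (\<lambda>_. lborel))"
proof -
  interpret psf: product_sigma_finite "\<lambda>_::'i. lborel :: complex measure" by (rule product_sigma_finite_lborel)
  have eq: "{y \<in> space (PiM J (\<lambda>_. lborel::complex measure)). y a = 0} = PiE J (\<lambda>j. if j = a then {0} else UNIV)"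
    using assms(2) by (auto simp: space_PiM PiE_iff extensional_def split: if_splits)
  have "emeasure (PiM J (\<lambda>_. lborel)) (PiE J (\<lambda>j. if j = a then {0::complex} else UNIV))
      = (\<Prod>j\<in>J. emeasure lborel (if j = a then {0::complex} else UNIV))"
    by (rule psf.emeasure_PiM) (auto simp: assms)
  also have "\<dots> = 0" using assms by (intro prod_zero) auto
  finally have "emeasure (PiM J (\<lambda>_. lborel)) (PiE J (\<lambda>j. if j = a then {0::complex} else UNIV)) = 0" .
  moreover have "PiE J (\<lambda>j. if j = a then {0::complex} else UNIV) \<in> sets (PiM J (\<lambda>_. lborel))"
    by (rule sets_PiM_I_finite) (auto simp: assms)
  ultimately show ?thesis unfolding eq by (intro null_setsI)
qed

lemma det_AM2: "Determinant.det (AM 2 al u y th) =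
   al 0 0 th * y (u 0 0) * (al 1 1 th * y (u 1 1)) - al 0 1 th * y (u 0 1) * (al 1 0 th * y (u 1 0))"
proof -
  let ?A = "AM 2 al u y th"
  have c: "mat_delete ?A 1 j \<in> carrier_mat 1 1" for j
    using mat_delete_carrier[OF AM_carrier[of 2 al u y th]] by simp
  have d0: "Determinant.det (mat_delete ?A 1 0) = ?A $$ (0,1)"
    using det_single[OF c[of 0]] by (simp add: mat_delete_def)
  have d1: "Determinant.det (mat_delete ?A 1 1) = ?A $$ (0,0)"
    using det_single[OF c[of 1]] by (simp add: mat_delete_def)
  have "Determinant.det ?A = (\<Sum>j<2. ?A $$ (1,j) * cofactor ?A 1 j)"
    by (rule laplace_expansion_row[OF AM_carrier]) simp
  also have "\<dots> = ?A $$ (1,0) * cofactor ?A 1 0 + ?A $$ (1,1) * cofactor ?A 1 1"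
    by (simp add: numeral_2_eq_2)
  also have "\<dots> = - ?A $$ (1,0) * ?A $$ (0,1) + ?A $$ (1,1) * ?A $$ (0,0)"
    unfolding cofactor_def d0 d1 by simp
  finally show ?thesis by (simp add: algebra_simps)
qed

definition OKn :: "nat \<Rightarrow> (nat \<Rightarrow> nat \<Rightarrow> real \<Rightarrow> complex) \<Rightarrow> (nat \<Rightarrow> nat \<Rightarrow> 'i) \<Rightarrow> bool" where
  "OKn n al u \<longleftrightarrow> (\<forall>J. finite J \<longrightarrow> (\<forall>i<n. \<forall>j<n. u i j \<in> J) \<longrightarrow>
      badset J n al u \<in> null_sets (PiM J (\<lambda>_. lborel)))"

lemma base2:
  assumes u01: "u 0 1 = u 0 0" and u10: "u 1 0 = u 1 1"
    and nz: "\<And>th. th \<in> {0<..<1} \<Longrightarrow> al 0 0 th * al 1 1 th - al 0 1 th * al 1 0 th \<noteq> 0"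
    and dif: "\<And>i j x. (\<lambda>th. al i j th) differentiable (at x)"
  shows "OKn 2 al u"
  unfolding OKn_def
proof (intro allI impI)
  fix J assume finJ: "finite J" and uJ: "\<forall>i<2. \<forall>j<2. u i j \<in> J"
  let ?H = "\<lambda>a. {y \<in> space (PiM J (\<lambda>_. lborel::complex measure)). y a = 0}"
  have sub: "badset J 2 al u \<subseteq> ?H (u 0 0) \<union> ?H (u 1 1)"
  proof
    fix y assume "y \<in> badset J 2 al u"
    then obtain th where y: "y \<in> space (PiM J (\<lambda>_. lborel))" and th: "th \<in> {0<..<1}"
        and d: "Determinant.det (AM 2 al u y th) = 0"
      unfolding badset_def by auto
    have "y (u 0 0) * y (u 1 1) * (al 0 0 th * al 1 1 th - al 0 1 th * al 1 0 th) = 0"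
      using d unfolding det_AM2 u01 u10 by (simp add: algebra_simps)
    with nz[OF th] have "y (u 0 0) = 0 \<or> y (u 1 1) = 0" by simp
    then show "y \<in> ?H (u 0 0) \<union> ?H (u 1 1)" using y by auto
  qed
  have uJ': "u i j \<in> J" if "i < 2" "j < 2" for i j using uJ that by auto
  have "badset J 2 al u \<in> sets (PiM J (\<lambda>_. lborel))"
    by (rule badset_sets[OF uJ' dif])
  moreover have "?H (u 0 0) \<union> ?H (u 1 1) \<in> null_sets (PiM J (\<lambda>_. lborel))"
    using uJ by (intro null_sets.Un hyperplane_null finJ) auto
  ultimately show "badset J 2 al u \<in> null_sets (PiM J (\<lambda>_. lborel))"
    using sub null_sets_subset by blast
qed

lemma chain:
  assumes base: "OKn 2 al u"
    and fr: "\<And>n i j. 2 \<le> n \<Longrightarrow> n \<le> N \<Longrightarrow> i \<le> n \<Longrightarrow> j \<le> n \<Longrightarrow> (i,j) \<noteq> (n,n) \<Longrightarrow> u i j \<noteq> u n n"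
    and anz: "\<And>n th. 2 \<le> n \<Longrightarrow> n \<le> N \<Longrightarrow> al n n th \<noteq> 0"
    and dif: "\<And>i j x. (\<lambda>th. al i j th) differentiable (at x)"
    and m: "2 \<le> m"
  shows "m \<le> Suc N \<longrightarrow> OKn m al u"
  using m
proof (induction m rule: nat_induct_at_least)
  case base then show ?case using assms(1) by simp
next
  case (Suc m)
  show ?case
  proof
    assume mN: "Suc m \<le> Suc N"
    have IH: "OKn m al u" using Suc mN by auto
    show "OKn (Suc m) al u" unfolding OKn_def
    proof (intro allI impI)
      fix J :: "'a set" assume fin: "finite J" and uJ: "\<forall>i<Suc m. \<forall>j<Suc m. u i j \<in> J"
      have frm: "\<And>i j. i \<le> m \<Longrightarrow> j \<le> m \<Longrightarrow> (i,j) \<noteq> (m,m) \<Longrightarrow> u i j \<noteq> u m m"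
        using fr Suc mN by auto
      have "\<forall>i<m. \<forall>j<m. u i j \<in> J - {u m m}" using uJ frm by auto
      then have IHJ: "badset (J - {u m m}) m al u \<in> null_sets (PiM (J - {u m m}) (\<lambda>_. lborel))"
        using IH fin unfolding OKn_def by auto
      show "badset J (Suc m) al u \<in> null_sets (PiM J (\<lambda>_. lborel))"
      proof (rule step[where n=m and u=u and al=al and J=J])
        show "finite J" by fact
        show "u i j \<in> J" if "i \<le> m" "j \<le> m" for i j using uJ that by auto
        show "u i j \<noteq> u m m" if "i \<le> m" "j \<le> m" "(i,j) \<noteq> (m,m)" for i j using frm that by auto
        show "al m m th \<noteq> 0" for th using anz Suc mN by auto
        show "(\<lambda>th. al i j th) differentiable (at x)" for i j x by (rule dif)
        show "badset (J - {u m m}) m al u \<in> null_sets (PiM (J - {u m m}) (\<lambda>_. lborel))" by (rule IHJ)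
      qed

    qed
  qed
qed

definition rho :: "nat \<Rightarrow> nat \<Rightarrow> nat \<Rightarrow> nat \<Rightarrow> int" where
  "rho K L tau p = (if p = 0 then int (K*L+tau) + 1 else if p = 1 then int (K*L+tau) + 2
     else if p \<le> L then (if p \<le> L - tau then int (K*L+tau+p) + 1 else int (K*L+L) - int p + 1)
     else int (K*L+L) - int p + 1)"

definition kk :: "nat \<Rightarrow> nat \<Rightarrow> nat \<Rightarrow> nat" where
  "kk K L p = (if p \<le> L then 0 else (K*L+L-p) div L + 1)"

definition off :: "nat \<Rightarrow> nat \<Rightarrow> nat \<Rightarrow> nat \<Rightarrow> int" where
  "off K L tau p = (if p \<le> 1 then 0 else if p \<le> L then
       (if p \<le> L - tau then int p - 1 else int L - int p - int tau)
     else int ((K*L+L-p) mod L))"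

definition uu :: "nat \<Rightarrow> nat \<Rightarrow> nat \<Rightarrow> nat \<Rightarrow> nat \<Rightarrow> nat \<times> int" where
  "uu K L tau i j = (kk K L j, rho K L tau i + off K L tau j)"

lemma fresh_TD:
  fixes r :: "nat \<Rightarrow> int" and ofs :: "nat \<Rightarrow> int" and c :: "nat \<Rightarrow> nat"
  assumes "\<forall>i<n. r i > r n" "\<forall>j<n. c j = c n \<longrightarrow> ofs j > ofs n" "i \<le> n" "j \<le> n" "(i,j) \<noteq> (n,n)"
  shows "(c j, r i + ofs j) \<noteq> (c n, r n + ofs n)"
proof
  assume eq: "(c j, r i + ofs j) = (c n, r n + ofs n)"
  show False
  proof (cases "j = n")
    case True
    then have "i < n" using assms by auto
    then show False using eq assms(1) True by auto
  next
    case False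
    then have "j < n" using assms by auto
    moreover have "r i \<ge> r n"
    proof (cases "i = n")
      case False
      then have "i < n" using assms(3) by simp
      then show ?thesis using assms(1) by fastforce
    qed simp
    ultimately show False using eq assms(2) by fastforce
  qed
qed

lemma fresh_BU:
  fixes r :: "nat \<Rightarrow> int" and ofs :: "nat \<Rightarrow> int" and c :: "nat \<Rightarrow> nat"
  assumes "\<forall>i<n. r i < r n" "\<forall>j<n. c j = c n \<longrightarrow> ofs j < ofs n" "i \<le> n" "j \<le> n" "(i,j) \<noteq> (n,n)"
  shows "(c j, r i + ofs j) \<noteq> (c n, r n + ofs n)"
proof
  assume eq: "(c j, r i + ofs j) = (c n, r n + ofs n)"
  show False
  proof (cases "j = n")
    case True
    then have "i < n" using assms by auto
    then show False using eq assms(1) True by auto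
  next
    case False
    then have "j < n" using assms by auto
    moreover have "r i \<le> r n"
    proof (cases "i = n")
      case False
      then have "i < n" using assms(3) by simp
      then show ?thesis using assms(1) by fastforce
    qed simp
    ultimately show False using eq assms(2) by fastforce
  qed
qed

lemma div_eq_mod_less:
  fixes a b L :: nat
  assumes "a div L = b div L" "a < b"
  shows "a mod L < b mod L"
proof -
  have "a = L * (a div L) + a mod L" "b = L * (b div L) + b mod L" by simp_all
  moreover have "L * (a div L) = L * (b div L)" using assms(1) by simp
  ultimately show ?thesis using assms(2) by linarith
qed

lemma TD_or_BU:
  assumes tau: "tau < L" and n2: "2 \<le> n" and nP: "n \<le> K*L+L"
  shows "((\<forall>i<n. rho K L tau i > rho K L tau n) \<and> (\<forall>j<n. kk K L j = kk K L n \<longrightarrow> off K L tau j > off K L tau n))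
       \<or> ((\<forall>i<n. rho K L tau i < rho K L tau n) \<and> (\<forall>j<n. kk K L j = kk K L n \<longrightarrow> off K L tau j < off K L tau n))"
proof (cases "n \<le> L")
  case nL: True
  show ?thesis
  proof (cases "n \<le> L - tau")
    case True
    have "\<forall>i<n. rho K L tau i < rho K L tau n"
      using nL True n2 tau by (auto simp: rho_def)
    moreover have "\<forall>j<n. kk K L j = kk K L n \<longrightarrow> off K L tau j < off K L tau n"
      using nL True n2 tau by (auto simp: off_def)
    ultimately show ?thesis by blast
  next
    case False
    have "\<forall>i<n. rho K L tau i > rho K L tau n"
      using nL False n2 tau by (auto simp: rho_def)
    moreover have "\<forall>j<n. kk K L j = kk K L n \<longrightarrow> off K L tau j > off K L tau n"
      using nL False n2 tau by (auto simp: off_def)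
    ultimately show ?thesis by blast
  qed
next
  case nL: False
  have "\<forall>i<n. rho K L tau i > rho K L tau n"
    using nL n2 nP tau by (auto simp: rho_def)
  moreover have "\<forall>j<n. kk K L j = kk K L n \<longrightarrow> off K L tau j > off K L tau n"
  proof (intro allI impI)
    fix j assume j: "j < n" and kj: "kk K L j = kk K L n"
    have "kk K L n \<ge> 1" using nL by (simp add: kk_def)
    then have jL: "\<not> j \<le> L" using kj by (auto simp: kk_def split: if_splits)
    then have "(K*L+L-n) div L = (K*L+L-j) div L" using kj nL by (simp add: kk_def)
    moreover have "K*L+L-n < K*L+L-j" using j nP by simp
    ultimately have "(K*L+L-n) mod L < (K*L+L-j) mod L" by (rule div_eq_mod_less)
    then show "off K L tau j > off K L tau n" using jL nL j tau by (simp add: off_def)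
  qed
  ultimately show ?thesis by blast
qed

lemma uu_fresh:
  assumes "tau < L" "2 \<le> n" "n \<le> K*L+L" "i \<le> n" "j \<le> n" "(i,j) \<noteq> (n,n)"
  shows "uu K L tau i j \<noteq> uu K L tau n n"
  using TD_or_BU[OF assms(1-3)] fresh_TD[OF _ _ assms(4-6)] fresh_BU[OF _ _ assms(4-6)]
  unfolding uu_def by blast

lemma rho_range:
  assumes "tau < L" "p \<le> K*L+L"
  shows "1 \<le> rho K L tau p" "rho K L tau p \<le> int (K*L+L) + 1"
proof -
  have "int p \<le> int K * int L + int L" using assms(2)
    by (metis of_nat_add of_nat_le_iff of_nat_mult)
  moreover have "0 \<le> int K * int L" by simp
  ultimately show "1 \<le> rho K L tau p" "rho K L tau p \<le> int (K*L+L) + 1"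
    using assms by (auto simp: rho_def)
qed

lemma kk_range:
  assumes "1 \<le> K" "1 \<le> L"
  shows "kk K L p \<le> K"
proof (cases "p \<le> L")
  case False
  have kl: "0 < K * L" using assms by simp
  then have "K*L+L-p < K*L" using False by linarith
  then have "(K*L+L-p) div L < K" by (intro less_mult_imp_div_less) simp
  then show ?thesis using False by (simp add: kk_def)
qed (simp add: kk_def)

definition qs :: "nat \<Rightarrow> nat \<Rightarrow> nat \<Rightarrow> nat" where
  "qs L tau l = (if l = tau then 0 else if l < tau then L - l else l + 1 - tau)"

definition qi :: "nat \<Rightarrow> nat \<Rightarrow> nat \<Rightarrow> nat \<Rightarrow> nat" where
  "qi K L k l = K*L + L - ((k - 1)*L + l)"

lemma qs_props:
  assumes "tau < L" "l < L"
  shows "qs L tau l \<le> L" "qs L tau l \<noteq> 1" "kk K L (qs L tau l) = 0"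
    "off K L tau (qs L tau l) = int l - int tau"
  using assms by (auto simp: qs_def kk_def off_def)

lemma qi_aux:
  fixes k K l L :: nat
  assumes "1 \<le> k" "k \<le> K" "l < L"
  shows "(k - 1)*L + l < K*L"
proof -
  have "(k - 1)*L + l < (k-1)*L + L" by (rule add_strict_left_mono[OF assms(3)])
  also have "\<dots> = k * L" using assms(1) by (cases k) auto
  also have "\<dots> \<le> K * L" using assms(2) by simp
  finally show ?thesis .
qed

lemma qi_props:
  assumes "1 \<le> k" "k \<le> K" "l < L"
  shows "L < qi K L k l" "qi K L k l \<le> K*L+L" "kk K L (qi K L k l) = k"
    "off K L tau (qi K L k l) = int l"
proof -
  have a: "(k - 1)*L + l < K*L" by (rule qi_aux[OF assms])
  show 1: "L < qi K L k l" using a by (simp add: qi_def)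
  show "qi K L k l \<le> K*L+L" by (simp add: qi_def)
  have e: "K*L+L - qi K L k l = (k - 1)*L + l" using a by (simp add: qi_def)
  have d: "((k - 1)*L + l) div L = k - 1" "((k - 1)*L + l) mod L = l" using assms(3) by simp_all
  show "kk K L (qi K L k l) = k" using 1 e d assms(1) by (simp add: kk_def)
  show "off K L tau (qi K L k l) = int l" using 1 e d assms(3) by (simp add: off_def)
qed

lemma bij_qs:
  assumes "tau < L"
  shows "bij_betw (qs L tau) {..<L} ({0} \<union> {2..L})"
proof (rule bij_betw_byWitness[where f'="\<lambda>q. if q = 0 then tau else if q \<le> L - tau then q - 1 + tau else L - q"])
  show "\<forall>a\<in>{..<L}. (\<lambda>q. if q = 0 then tau else if q \<le> L - tau then q - 1 + tau else L - q) (qs L tau a) = a"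
    using assms by (auto simp: qs_def)
  show "\<forall>a'\<in>{0} \<union> {2..L}. qs L tau ((\<lambda>q. if q = 0 then tau else if q \<le> L - tau then q - 1 + tau else L - q) a') = a'"
    using assms by (auto simp: qs_def)
  show "qs L tau ` {..<L} \<subseteq> {0} \<union> {2..L}"
    using assms by (auto simp: qs_def)
  show "(\<lambda>q. if q = 0 then tau else if q \<le> L - tau then q - 1 + tau else L - q) ` ({0} \<union> {2..L}) \<subseteq> {..<L}"
    using assms by auto
qed

lemma bij_qi:
  assumes "1 \<le> L"
  shows "bij_betw (\<lambda>(k,l). qi K L k l) ({1..K} \<times> {..<L}) {L+1..K*L+L}"
proof (rule bij_betw_byWitness[where f'="\<lambda>q. ((K*L+L-q) div L + 1, (K*L+L-q) mod L)"])
  show "\<forall>a\<in>{1..K} \<times> {..<L}. (\<lambda>q. ((K*L+L-q) div L + 1, (K*L+L-q) mod L)) ((\<lambda>(k,l). qi K L k l) a) = a"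
  proof
    fix a assume "a \<in> {1..K} \<times> {..<L}"
    then obtain k l where a: "a = (k,l)" "1 \<le> k" "k \<le> K" "l < L" by auto
    have x: "(k - 1)*L + l < K*L" by (rule qi_aux[OF a(2-4)])
    have e: "K*L+L - qi K L k l = (k - 1)*L + l" using x by (simp add: qi_def)
    have d: "((k - 1)*L + l) div L = k - 1" "((k - 1)*L + l) mod L = l" using a(4) by simp_all
    show "(\<lambda>q. ((K*L+L-q) div L + 1, (K*L+L-q) mod L)) ((\<lambda>(k,l). qi K L k l) a) = a"
      using a e d by simp
  qed
  show "\<forall>a'\<in>{L+1..K*L+L}. (\<lambda>(k,l). qi K L k l) ((\<lambda>q. ((K*L+L-q) div L + 1, (K*L+L-q) mod L)) a') = a'"
  proof
    fix q assume q: "q \<in> {L+1..K*L+L}"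
    have "(K*L+L-q) div L * L + (K*L+L-q) mod L = K*L+L-q" by simp
    then show "(\<lambda>(k,l). qi K L k l) ((\<lambda>q. ((K*L+L-q) div L + 1, (K*L+L-q) mod L)) q) = q"
      using q by (simp add: qi_def)
  qed
  show "(\<lambda>(k,l). qi K L k l) ` ({1..K} \<times> {..<L}) \<subseteq> {L+1..K*L+L}"
    using qi_props(1,2) by fastforce
  show "(\<lambda>q. ((K*L+L-q) div L + 1, (K*L+L-q) mod L)) ` {L+1..K*L+L} \<subseteq> {1..K} \<times> {..<L}"
  proof
    fix x assume "x \<in> (\<lambda>q. ((K*L+L-q) div L + 1, (K*L+L-q) mod L)) ` {L+1..K*L+L}"
    then obtain q where q: "q \<in> {L+1..K*L+L}" "x = ((K*L+L-q) div L + 1, (K*L+L-q) mod L)" by auto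
    have "K*L+L-q < K*L" using q(1) assms by auto
    then have "(K*L+L-q) div L < K" by (intro less_mult_imp_div_less) simp
    then show "x \<in> {1..K} \<times> {..<L}" using q assms by auto
  qed
qed

lemma sum_split_cols:
  fixes F :: "nat \<Rightarrow> 'a::comm_monoid_add"
  assumes "tau < L"
  shows "(\<Sum>q<Suc (K*L+L). F q) = F 1 + (\<Sum>l<L. F (qs L tau l)) + (\<Sum>k\<in>{1..K}. \<Sum>l<L. F (qi K L k l))"
proof -
  have L1: "1 \<le> L" using assms by simp
  have U: "{..<Suc (K*L+L)} = {1} \<union> (({0} \<union> {2..L}) \<union> {L+1..K*L+L})" using L1 by auto
  have "(\<Sum>q<Suc (K*L+L). F q) = F 1 + ((\<Sum>q\<in>{0} \<union> {2..L}. F q) + (\<Sum>q\<in>{L+1..K*L+L}. F q))"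
  proof -
    have 1: "sum F ({1} \<union> (({0} \<union> {2..L}) \<union> {L+1..K*L+L})) = F 1 + sum F (({0} \<union> {2..L}) \<union> {L+1..K*L+L})"
      by (subst sum.union_disjoint) auto
    have 2: "sum F (({0} \<union> {2..L}) \<union> {L+1..K*L+L}) = sum F ({0} \<union> {2..L}) + sum F {L+1..K*L+L}"
      by (rule sum.union_disjoint) auto
    show ?thesis unfolding U 1 2 ..
  qed
  also have "(\<Sum>q\<in>{0} \<union> {2..L}. F q) = (\<Sum>l<L. F (qs L tau l))"
    using sum.reindex_bij_betw[OF bij_qs[OF assms], of F] by simp
  also have "(\<Sum>q\<in>{L+1..K*L+L}. F q) = (\<Sum>(k,l)\<in>{1..K} \<times> {..<L}. F (qi K L k l))"
    using sum.reindex_bij_betw[OF bij_qi[OF L1, of K], of F] by (simp add: case_prod_beta')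
  also have "\<dots> = (\<Sum>k\<in>{1..K}. \<Sum>l<L. F (qi K L k l))"
    by (rule sum.cartesian_product[symmetric])
  finally show ?thesis by (simp add: add.assoc)
qed

definition ex :: "real \<Rightarrow> complex" where
  "ex r = exp (\<i> * complex_of_real (2 * pi * r))"

lemma ex_add: "ex (a + b) = ex a * ex b"
  unfolding ex_def by (simp add: distrib_left ring_distribs exp_add[symmetric])

lemma ex_nz[simp]: "ex a \<noteq> 0"
  unfolding ex_def by simp

lemma ex_int: "a \<in> \<int> \<Longrightarrow> ex a = 1"
  unfolding ex_def using exp_integer_2pi[of a] by (simp add: mult.commute mult.left_commute)

lemma ex_lin_diff: "(\<lambda>th. ex (th * c)) differentiable (at x)"
proof -
  have eq: "(\<lambda>th. ex (th * c)) = exp \<circ> (\<lambda>th. th *\<^sub>R (\<i> * complex_of_real (2*pi*c)))"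
    by (auto simp: ex_def fun_eq_iff scaleR_conv_of_real algebra_simps)
  show ?thesis unfolding eq
    by (rule differentiable_chain_at[OF bounded_linear_imp_differentiable[OF bounded_linear_scaleR_left]
          field_differentiable_imp_differentiable[OF field_differentiable_within_exp]])
qed

definition aal :: "nat \<Rightarrow> nat \<Rightarrow> nat \<Rightarrow> real \<Rightarrow> nat \<Rightarrow> nat \<Rightarrow> real \<Rightarrow> complex" where
  "aal K L tau df i j th = (if j = 1 then ex (th * real_of_int (rho K L tau i)) else 1) *
      (if kk K L j = 0 then ex (df * real_of_int (rho K L tau i)) else 1)"

lemma aal_diff: "(\<lambda>th. aal K L tau df i j th) differentiable (at x)"
  unfolding aal_def by (cases "j = 1") (auto intro!: differentiable_mult ex_lin_diff)

lemma aal_nz: "aal K L tau df i j th \<noteq> 0"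
  unfolding aal_def by simp

definition yd :: "(int \<Rightarrow> complex) \<Rightarrow> (nat \<Rightarrow> int \<Rightarrow> complex) \<Rightarrow> nat \<times> int \<Rightarrow> complex" where
  "yd s ii kt = (if fst kt = 0 then s (snd kt) else ii (fst kt) (snd kt))"

lemma row_sum:
  assumes tau: "tau < L" and p: "p \<le> K*L+L"
  shows "(\<Sum>q<Suc (K*L+L). aal K L tau df p q th * yd s ii (uu K L tau p q) * X q) =
     ex (th * rho K L tau p) * ex (df * rho K L tau p) * s (rho K L tau p) * X 1
     + (\<Sum>l<L. ex (df * rho K L tau p) * s (rho K L tau p + int l - int tau) * X (qs L tau l))
     + (\<Sum>k\<in>{1..K}. \<Sum>l<L. ii k (rho K L tau p + int l) * X (qi K L k l))"
proof -
  let ?t = "rho K L tau p"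
  let ?F = "\<lambda>q. aal K L tau df p q th * yd s ii (uu K L tau p q) * X q"
  have L1: "1 \<le> L" using tau by simp
  have f1: "?F 1 = ex (th * ?t) * ex (df * ?t) * s ?t * X 1"
    using L1 by (simp add: aal_def yd_def uu_def kk_def off_def)
  have fs: "?F (qs L tau l) = ex (df * ?t) * s (?t + int l - int tau) * X (qs L tau l)" if "l < L" for l
    using qs_props(1,2)[OF tau that] qs_props(3,4)[where K=K, OF tau that] by (simp add: aal_def yd_def uu_def add_diff_eq)
  have fi: "?F (qi K L k l) = ii k (?t + int l) * X (qi K L k l)" if "k \<in> {1..K}" "l < L" for k l
  proof -
    have k1: "1 \<le> k" "k \<le> K" using that by auto
    from qi_props(1-3)[OF k1 that(2)] qi_props(4)[where tau=tau, OF k1 that(2)] L1 k1 show ?thesis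
      by (simp add: aal_def yd_def uu_def)
  qed
  have s1: "(\<Sum>l<L. ?F (qs L tau l)) = (\<Sum>l<L. ex (df * ?t) * s (?t + int l - int tau) * X (qs L tau l))"
    by (intro sum.cong refl fs) simp
  have s2: "(\<Sum>k\<in>{1..K}. \<Sum>l<L. ?F (qi K L k l)) = (\<Sum>k\<in>{1..K}. \<Sum>l<L. ii k (?t + int l) * X (qi K L k l))"
    by (intro sum.cong refl fi) auto
  show ?thesis
    unfolding sum_split_cols[OF tau, of ?F K] f1 s1 s2 ..
qed

lemma AM_kernel:
  assumes "Determinant.det (AM n al u y th) \<noteq> 0"
    and "\<And>p. p < n \<Longrightarrow> (\<Sum>q<n. al p q th * y (u p q) * X q) = 0"
    and "q < n"
  shows "X q = 0"
proof -
  let ?A = "AM n al u y th"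
  let ?v = "Matrix.vec n X"
  have "mult_mat_vec ?A ?v = zero_vec n"
  proof (rule eq_vecI)
    fix p assume "p < dim_vec (zero_vec n :: complex Matrix.vec)"
    then have p: "p < n" by simp
    have "vec_index (mult_mat_vec ?A ?v) p = (\<Sum>q\<in>{0..<n}. ?A $$ (p,q) * X q)"
      using p by (simp add: scalar_prod_def)
    also have "\<dots> = (\<Sum>q<n. al p q th * y (u p q) * X q)"
      using p by (intro sum.cong) auto
    also have "\<dots> = 0" using assms(2)[OF p] .
    finally show "vec_index (mult_mat_vec ?A ?v) p = vec_index (zero_vec n) p" using p by simp
  qed simp
  moreover have "?v \<in> carrier_vec n" by simp
  ultimately have "?v = zero_vec n"
    using det_0_iff_vec_prod_zero[OF AM_carrier[of n al u y th]] assms(1) by blast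
  then have "vec_index ?v q = vec_index (zero_vec n) q" by simp
  then show ?thesis using assms(3) by simp
qed

lemma ex_ne_1: "0 < th \<Longrightarrow> th < 1 \<Longrightarrow> ex th \<noteq> 1"
  unfolding ex_def using exp_i_ne_1[of "2 * pi * th"] by simp

lemma base_nz:
  assumes tau: "tau < L" and th: "th \<in> {0<..<1}"
  shows "aal K L tau df 0 0 th * aal K L tau df 1 1 th - aal K L tau df 0 1 th * aal K L tau df 1 0 th \<noteq> 0"
proof -
  have L1: "1 \<le> L" using tau by simp
  let ?r = "rho K L tau 0"
  have r1: "rho K L tau 1 = ?r + 1" by (simp add: rho_def)
  have k: "kk K L 0 = 0" "kk K L 1 = 0" using L1 by (auto simp: kk_def)
  have e1: "ex (th * real_of_int (?r + 1)) = ex (th * real_of_int ?r) * ex th"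
    by (simp add: distrib_left ex_add)
  have "aal K L tau df 0 0 th * aal K L tau df 1 1 th - aal K L tau df 0 1 th * aal K L tau df 1 0 th
      = ex (df * real_of_int ?r) * ex (df * real_of_int (?r + 1)) * ex (th * real_of_int ?r) * (ex th - 1)"
    unfolding aal_def k r1 e1 by (simp add: algebra_simps)
  moreover have "ex th - 1 \<noteq> 0" using ex_ne_1 th by auto
  ultimately show ?thesis by simp
qed

lemma generic_OK:
  assumes tau: "tau < L"
  shows "OKn (Suc (K*L+L)) (aal K L tau df) (uu K L tau)"
proof -
  have L1: "1 \<le> L" using tau by simp
  have k: "kk K L 0 = 0" "kk K L 1 = 0" using L1 by (auto simp: kk_def)
  have o: "off K L tau 0 = 0" "off K L tau 1 = 0" by (auto simp: off_def)
  have base: "OKn 2 (aal K L tau df) (uu K L tau)"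
  proof (rule base2)
    show "uu K L tau 0 1 = uu K L tau 0 0" "uu K L tau 1 0 = uu K L tau 1 1"
      using k o by (simp_all add: uu_def)
    show "aal K L tau df 0 0 th * aal K L tau df 1 1 th - aal K L tau df 0 1 th * aal K L tau df 1 0 th \<noteq> 0"
      if "th \<in> {0<..<1}" for th using base_nz[OF tau that] .
    show "(\<lambda>th. aal K L tau df i j th) differentiable (at x)" for i j x by (rule aal_diff)
  qed
  have "Suc (K*L+L) \<le> Suc (K*L+L) \<longrightarrow> OKn (Suc (K*L+L)) (aal K L tau df) (uu K L tau)"
  proof (rule chain[where N="K*L+L"])
    show "OKn 2 (aal K L tau df) (uu K L tau)" by (rule base)
    show "uu K L tau i j \<noteq> uu K L tau n n"
      if "2 \<le> n" "n \<le> K*L+L" "i \<le> n" "j \<le> n" "(i,j) \<noteq> (n,n)" for n i j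
      using uu_fresh[OF tau that] .
    show "aal K L tau df n n th \<noteq> 0" for n th by (rule aal_nz)
    show "(\<lambda>th. aal K L tau df i j th) differentiable (at x)" for i j x by (rule aal_diff)
    show "2 \<le> Suc (K*L+L)" using L1 by simp
  qed
  then show ?thesis by simp
qed

definition XX :: "nat \<Rightarrow> nat \<Rightarrow> nat \<Rightarrow> complex \<Rightarrow> (nat \<Rightarrow> complex) \<Rightarrow> (nat \<Rightarrow> nat \<Rightarrow> complex) \<Rightarrow> nat \<Rightarrow> complex" where
  "XX K L tau x1 c d q = (if q = 1 then x1 else if q \<le> L then c (nat (off K L tau q + int tau))
      else d (nat (off K L tau q)) (kk K L q))"

lemma XX_qs: "tau < L \<Longrightarrow> l < L \<Longrightarrow> XX K L tau x1 c d (qs L tau l) = c l"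
  using qs_props(1,2)[of tau L l] qs_props(3,4)[where K=K, of tau L l] by (simp add: XX_def)

lemma XX_qi: "tau < L \<Longrightarrow> k \<in> {1..K} \<Longrightarrow> l < L \<Longrightarrow> XX K L tau x1 c d (qi K L k l) = d l k"
  using qi_props(1-3)[of k K l L] qi_props(4)[where tau=tau, of k K l L] by (auto simp: XX_def)

lemma XX_1: "XX K L tau x1 c d 1 = x1" "XX K L tau x1 c d (Suc 0) = x1" by (simp_all add: XX_def)

lemma det_sys_zero:
  assumes tau: "tau < L" and T: "K*L+L < T"
    and nz: "Determinant.det (AM (Suc (K*L+L)) (aal K L tau df) (uu K L tau) (yd s ii) th) \<noteq> 0"
    and eq: "\<And>t. t \<in> {1..int T} \<Longrightarrow>
       (\<Sum>l<L. ex (df * t) * s (t + int l - int tau) * c l) + (\<Sum>k\<in>{1..K}. \<Sum>l<L. ii k (t + int l) * d l k)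
         + ex (th * t) * ex (df * t) * s t * x1 = 0"
  shows "x1 = 0 \<and> (\<forall>l<L. c l = 0) \<and> (\<forall>k\<in>{1..K}. \<forall>l<L. d l k = 0)"
proof -
  let ?X = "XX K L tau x1 c d"
  have ker: "?X q = 0" if "q < Suc (K*L+L)" for q
  proof (rule AM_kernel[OF nz _ that])
    fix p assume p: "p < Suc (K*L+L)"
    let ?t = "rho K L tau p"
    have r: "1 \<le> ?t" "?t \<le> int (K*L+L) + 1" using rho_range[OF tau, of p K] p by auto
    have "int (K*L+L) < int T" using T by (simp only: of_nat_less_iff)
    then have tT: "?t \<in> {1..int T}" using r by auto
    have "(\<Sum>q<Suc (K*L+L). aal K L tau df p q th * yd s ii (uu K L tau p q) * ?X q) =
     ex (th * ?t) * ex (df * ?t) * s ?t * ?X 1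
     + (\<Sum>l<L. ex (df * ?t) * s (?t + int l - int tau) * ?X (qs L tau l))
     + (\<Sum>k\<in>{1..K}. \<Sum>l<L. ii k (?t + int l) * ?X (qi K L k l))"
      using p by (intro row_sum tau) simp
    also have "\<dots> = ex (th * ?t) * ex (df * ?t) * s ?t * x1
     + (\<Sum>l<L. ex (df * ?t) * s (?t + int l - int tau) * c l)
     + (\<Sum>k\<in>{1..K}. \<Sum>l<L. ii k (?t + int l) * d l k)"
      using XX_qs[OF tau] XX_qi[OF tau] by (simp add: XX_1)
    also have "\<dots> = 0" using eq[OF tT] by (simp add: algebra_simps)
    finally show "(\<Sum>q<Suc (K*L+L). aal K L tau df p q th * yd s ii (uu K L tau p q) * ?X q) = 0" .
  qed
  have "x1 = 0" using ker[of 1] tau by (simp add: XX_1)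
  moreover have "\<forall>l<L. c l = 0"
  proof (intro allI impI)
    fix l assume l: "l < L"
    have "qs L tau l < Suc (K*L+L)" using qs_props(1)[OF tau l] by simp
    then show "c l = 0" using ker XX_qs[OF tau l] by metis
  qed
  moreover have "\<forall>k\<in>{1..K}. \<forall>l<L. d l k = 0"
  proof (intro ballI allI impI)
    fix k l assume k: "k \<in> {1..K}" and l: "l < L"
    have "qi K L k l < Suc (K*L+L)" using qi_props(2)[of k K l L] k l by auto
    then show "d l k = 0" using ker XX_qi[OF tau k l] by metis
  qed
  ultimately show ?thesis by blast
qed

lemma hinner_add_right: "hinner v (a + b) = hinner v a + hinner v b"
  unfolding hinner_def by (simp add: distrib_left sum.distrib)

lemma hinner_scale_right: "hinner v (c *s a) = c * hinner v a"
  unfolding hinner_def by (simp add: sum_distrib_left algebra_simps)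

lemma hinner_scale_left: "hinner (c *s v) a = cnj c * hinner v a"
  unfolding hinner_def by (simp add: sum_distrib_left algebra_simps)

lemma hinner_sum_right: "hinner v (sum f A) = (\<Sum>x\<in>A. hinner v (f x))"
  unfolding hinner_def
  by (induction A rule: infinite_finite_induct) (simp_all add: sum_component distrib_left sum.distrib)

lemma hinner_zero_left[simp]: "hinner 0 a = 0"
  unfolding hinner_def by simp

lemma hinner_zero_right[simp]: "hinner a 0 = 0"
  unfolding hinner_def by simp

lemma hinner_cnj: "hinner v w = cnj (hinner w v)"
  unfolding hinner_def by (simp add: mult.commute)

lemma hinner_rx: "hinner v (rx s ii h g K tau df m) =
    ex (df * real_of_int m) * s (m - int tau) * hinner v h + (\<Sum>k\<in>{1..K}. ii k m * hinner v (g k))"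
  unfolding rx_def hinner_add_right hinner_scale_right hinner_sum_right
  by (simp add: ex_def mult.assoc)

lemma inner_hinner: "inner a b = Re (hinner a b)"
  unfolding inner_vec_def hinner_def by (simp add: inner_complex_def Re_sum)

lemma costF_nonneg: "0 \<le> costF s y L T om w"
  unfolding costF_def by (intro sum_nonneg) simp

lemma costF_zeroD:
  assumes "costF s y L T om w = 0" "t \<in> {1..int T}"
  shows "s t = (\<Sum>l<L. exp (- \<i> * complex_of_real (2 * pi * om * of_int (t + int l))) * hinner (w l) (y (t + int l)))"
proof -
  have "\<forall>t\<in>{1..int T}. (cmod (s t - (\<Sum>l<L. exp (- \<i> * complex_of_real (2 * pi * om * of_int (t + int l))) * hinner (w l) (y (t + int l)))))\<^sup>2 = 0"
    using assms(1) unfolding costF_def by (subst (asm) sum_nonneg_eq_0_iff) auto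
  then show ?thesis using assms(2) by auto
qed

lemma eq_transform:
  assumes eq: "s t = (\<Sum>l<L. exp (- \<i> * complex_of_real (2 * pi * om * of_int (t + int l))) * hinner (w l) (rx s ii h g K tau df (t + int l)))"
  shows "(\<Sum>l<L. ex (df * t) * s (t + int l - int tau) * (ex ((df - om) * l) * hinner (w l) h))
       + (\<Sum>k\<in>{1..K}. \<Sum>l<L. ii k (t + int l) * (ex (-(om * l)) * hinner (w l) (g k)))
       + ex ((om - df) * t) * ex (df * t) * s t * (-1) = 0"
proof -
  let ?E = "\<lambda>l::nat. exp (- \<i> * complex_of_real (2 * pi * om * of_int (t + int l)))"
  let ?A = "\<lambda>l::nat. ex (df * t) * s (t + int l - int tau) * (ex ((df - om) * l) * hinner (w l) h)"
  let ?B = "\<lambda>l::nat. \<Sum>k\<in>{1..K}. ii k (t + int l) * (ex (-(om * l)) * hinner (w l) (g k))"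
  have E: "?E l = ex (-(om * (real_of_int t + real l)))" for l
    unfolding ex_def by (simp add: algebra_simps)
  have i1: "ex (om * t) * ex (-(om * (real_of_int t + real l))) = ex (-(om * l))" for l :: nat
  proof -
    have "om * t + -(om * (real_of_int t + real l)) = -(om * l)" by (simp add: algebra_simps)
    then show ?thesis by (metis ex_add)
  qed
  have i2: "ex (-(om * l)) * ex (df * (real_of_int t + real l)) = ex (df * t) * ex ((df - om) * l)" for l :: nat
  proof -
    have "ex (-(om * l)) * ex (df * (real_of_int t + real l)) = ex (-(om * l) + df * (real_of_int t + real l))"
      by (rule ex_add[symmetric])
    also have "-(om * l) + df * (real_of_int t + real l) = df * t + (df - om) * l" by (simp add: algebra_simps)
    also have "ex (df * t + (df - om) * l) = ex (df * t) * ex ((df - om) * l)" by (simp add: ex_add)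
    finally show ?thesis .
  qed
  have trm: "ex (om * t) * (?E l * hinner (w l) (rx s ii h g K tau df (t + int l))) = ?A l + ?B l" for l :: nat
  proof -
    have hr: "hinner (w l) (rx s ii h g K tau df (t + int l))
       = ex (df * (real_of_int t + real l)) * s (t + int l - int tau) * hinner (w l) h
         + (\<Sum>k\<in>{1..K}. ii k (t + int l) * hinner (w l) (g k))"
      unfolding hinner_rx by simp
    have ee: "ex (om * t) * ?E l = ex (-(om * l))" using i1 E by simp
    have "ex (om * t) * (?E l * hinner (w l) (rx s ii h g K tau df (t + int l)))
        = ex (-(om * l)) * (ex (df * (real_of_int t + real l)) * s (t + int l - int tau) * hinner (w l) h
         + (\<Sum>k\<in>{1..K}. ii k (t + int l) * hinner (w l) (g k)))"
      by (subst hr, subst mult.assoc[symmetric], subst ee, rule refl)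
    also have "\<dots> = (ex (-(om * l)) * ex (df * (real_of_int t + real l))) * s (t + int l - int tau) * hinner (w l) h
         + (\<Sum>k\<in>{1..K}. ii k (t + int l) * (ex (-(om * l)) * hinner (w l) (g k)))"
      by (simp add: distrib_left sum_distrib_left algebra_simps)
    also have "\<dots> = ?A l + ?B l" unfolding i2 by (simp add: algebra_simps)
    finally show ?thesis .
  qed
  have "ex (om * t) * s t = (\<Sum>l<L. ex (om * t) * (?E l * hinner (w l) (rx s ii h g K tau df (t + int l))))"
    by (subst eq) (simp add: sum_distrib_left)
  also have "\<dots> = (\<Sum>l<L. ?A l) + (\<Sum>l<L. ?B l)" unfolding trm by (simp add: sum.distrib)
  also have "(\<Sum>l<L. ?B l) = (\<Sum>k\<in>{1..K}. \<Sum>l<L. ii k (t + int l) * (ex (-(om * l)) * hinner (w l) (g k)))"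
    by (rule sum.swap)
  finally have main: "ex (om * t) * s t = (\<Sum>l<L. ?A l) + (\<Sum>k\<in>{1..K}. \<Sum>l<L. ii k (t + int l) * (ex (-(om * l)) * hinner (w l) (g k)))" .
  have "ex (om * t) = ex ((om - df) * t) * ex (df * t)"
  proof -
    have "om * t = (om - df) * t + df * t" by (simp add: algebra_simps)
    then show ?thesis by (metis ex_add)
  qed
  then show ?thesis using main by (simp add: algebra_simps)
qed

lemma span_in_combos:
  fixes g :: "nat \<Rightarrow> complex ^ 'n"
  assumes "x \<in> span (g ` {1..K} \<union> (\<lambda>k. \<i> *s g k) ` {1..K})"
  shows "\<exists>c. x = (\<Sum>k\<in>{1..K}. c k *s g k)"
proof -
  let ?P = "\<lambda>x. \<exists>c. x = (\<Sum>k\<in>{1..K}. c k *s g k)"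
  have sub: "subspace (Collect ?P)"
    unfolding subspace_def
  proof (intro conjI ballI allI)
    show "0 \<in> Collect ?P" by (auto intro!: exI[of _ "\<lambda>_. 0"])
    fix x y assume "x \<in> Collect ?P" "y \<in> Collect ?P"
    then obtain c1 c2 where "x = (\<Sum>k\<in>{1..K}. c1 k *s g k)" "y = (\<Sum>k\<in>{1..K}. c2 k *s g k)" by auto
    then have "x + y = (\<Sum>k\<in>{1..K}. (c1 k + c2 k) *s g k)"
      by (simp add: sum.distrib vector_sadd_rdistrib)
    then show "x + y \<in> Collect ?P" by (intro CollectI exI[of _ "\<lambda>k. c1 k + c2 k"])
  next
    fix r :: real and x assume "x \<in> Collect ?P"
    then obtain c where c: "x = (\<Sum>k\<in>{1..K}. c k *s g k)" by auto
    have "r *\<^sub>R x = (\<Sum>k\<in>{1..K}. r *\<^sub>R (c k *s g k))" unfolding c by (rule scaleR_sum_right)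
    also have "\<dots> = (\<Sum>k\<in>{1..K}. (complex_of_real r * c k) *s g k)"
    proof (intro sum.cong refl)
      fix k
      have sc: "r *\<^sub>R z = complex_of_real r * z" for z :: complex by (simp add: scaleR_conv_of_real)
      show "r *\<^sub>R (c k *s g k) = (complex_of_real r * c k) *s g k"
        by (simp add: Finite_Cartesian_Product.vec_eq_iff sc mult.assoc)
    qed
    finally have "r *\<^sub>R x = (\<Sum>k\<in>{1..K}. (complex_of_real r * c k) *s g k)" .
    then show "r *\<^sub>R x \<in> Collect ?P" by (intro CollectI exI[of _ "\<lambda>k. complex_of_real r * c k"])
  qed
  have one: "?P (a *s g k)" if k: "k \<in> {1..K}" for k a
  proof -
    have "a *s g k = (\<Sum>k'\<in>{1..K}. (if k' = k then a else 0) *s g k')"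
      using k by (simp add: if_distrib[of "\<lambda>c. c *s g _"] sum.delta' cong: if_cong)
    then show ?thesis by (intro exI[of _ "\<lambda>k'. if k' = k then a else 0"])
  qed
  have gen: "?P v" if "v \<in> g ` {1..K} \<union> (\<lambda>k. \<i> *s g k) ` {1..K}" for v
    using that one[of _ 1] one[of _ "\<i>"] by auto
  show ?thesis using span_induct[OF assms sub] gen by blast
qed

lemma dual_exists:
  fixes h :: "complex ^ 'n" and g :: "nat \<Rightarrow> complex ^ 'n"
  assumes ind: "cindep_family (\<lambda>k. if k = 0 then h else g k) K"
  shows "\<exists>v. hinner h v = 1 \<and> (\<forall>k\<in>{1..K}. hinner (g k) v = 0)"
proof -
  let ?G = "g ` {1..K} \<union> (\<lambda>k. \<i> *s g k) ` {1..K}"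
  obtain y z where y: "y \<in> span ?G" and orth: "\<And>w. w \<in> span ?G \<Longrightarrow> real_inner_class.orthogonal z w" and hyz: "h = y + z"
    using orthogonal_subspace_decomp_exists[of ?G h] by blast
  have gz: "hinner (g k) z = 0" if k: "k \<in> {1..K}" for k
  proof -
    have "g k \<in> span ?G" "\<i> *s g k \<in> span ?G" using k by (auto intro: span_base)
    then have "inner z (g k) = 0" "inner z (\<i> *s g k) = 0" using orth unfolding real_inner_class.orthogonal_def by auto
    then have "Re (hinner (g k) z) = 0" "Re (hinner (\<i> *s g k) z) = 0"
      by (simp_all add: inner_hinner[symmetric] inner_commute)
    then have "Re (hinner (g k) z) = 0" "Im (hinner (g k) z) = 0"
      by (simp_all add: hinner_scale_left)
    then show ?thesis by (simp add: complex_eq_iff)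
  qed
  have z0: "z \<noteq> 0"
  proof
    assume "z = 0"
    then have "h \<in> span ?G" using y hyz by simp
    then obtain c where c: "h = (\<Sum>k\<in>{1..K}. c k *s g k)" using span_in_combos by blast
    let ?c = "\<lambda>k. if k = 0 then (1::complex) else - c k"
    have "(\<Sum>k\<in>{0..K}. ?c k *s (if k = 0 then h else g k)) = h + (\<Sum>k\<in>{1..K}. (- c k) *s g k)"
    proof -
      have "{0..K} = insert 0 {1..K}" by auto
      then show ?thesis by (simp add: sum.insert)
    qed
    also have "\<dots> = 0"
    proof -
      have n: "(- c k) *s g k = - (c k *s g k)" for k by (simp add: vec_eq_iff)
      show ?thesis unfolding n sum_negf by (simp add: c)
    qed
    finally have sum0: "(\<Sum>k\<in>{0..K}. ?c k *s (if k = 0 then h else g k)) = 0" .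
    have "?c 0 = 0" by (rule ind[unfolded cindep_family_def, rule_format, OF sum0]) simp
    then show False by simp
  qed
  have "Re (hinner h z) = inner h z" by (simp add: inner_hinner)
  also have "\<dots> = inner y z + inner z z" unfolding hyz by (simp add: inner_add_left)
  also have "inner y z = 0" using orth[OF y] unfolding real_inner_class.orthogonal_def by (simp add: inner_commute)
  finally have "Re (hinner h z) = inner z z" by simp
  moreover have "inner z z > 0" using z0 by simp
  ultimately have hz: "hinner h z \<noteq> 0" by auto
  let ?v = "(1 / hinner h z) *s z"
  have "hinner h ?v = 1" using hz by (simp add: hinner_scale_right)
  moreover have "\<forall>k\<in>{1..K}. hinner (g k) ?v = 0" using gz by (simp add: hinner_scale_right)
  ultimately show ?thesis by blast
qed

lemma ex_0[simp]: "ex 0 = 1" by (simp add: ex_def)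

lemma ex_neg_cancel: "exp (- \<i> * complex_of_real (2 * pi * om * x)) * ex (om * x) = 1"
proof -
  have "exp (- \<i> * complex_of_real (2 * pi * om * x)) = ex (-(om * x))"
    unfolding ex_def by (simp add: algebra_simps)
  then show ?thesis by (simp add: ex_add[symmetric])
qed

lemma zero_cost_exists:
  fixes h :: "complex ^ 'n" and g :: "nat \<Rightarrow> complex ^ 'n"
  assumes tau: "tau < L" and v: "hinner h v = 1" "\<forall>k\<in>{1..K}. hinner (g k) v = 0"
  shows "costF s (rx s ii h g K tau df) L T df (\<lambda>l. if l = tau then v else 0) = 0"
  unfolding costF_def
proof (intro sum.neutral ballI)
  fix t assume "t \<in> {1..int T}"
  have hv: "hinner v h = 1" using v(1) hinner_cnj[of v h] by simp
  have gv: "hinner v (g k) = 0" if "k \<in> {1..K}" for k using v(2) that hinner_cnj[of v "g k"] by simp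
  have "(\<Sum>l<L. exp (- \<i> * complex_of_real (2 * pi * df * of_int (t + int l))) *
        hinner (if l = tau then v else 0) (rx s ii h g K tau df (t + int l)))
      = (\<Sum>l<L. if l = tau then exp (- \<i> * complex_of_real (2 * pi * df * of_int (t + int l))) *
        hinner v (rx s ii h g K tau df (t + int l)) else 0)"
    by (intro sum.cong refl) auto
  also have "\<dots> = exp (- \<i> * complex_of_real (2 * pi * df * of_int (t + int tau))) *
        hinner v (rx s ii h g K tau df (t + int tau))"
    using tau by (simp add: sum.delta)
  also have "hinner v (rx s ii h g K tau df (t + int tau)) = ex (df * real_of_int (t + int tau)) * s t"
    unfolding hinner_rx using hv gv by simp
  also have "exp (- \<i> * complex_of_real (2 * pi * df * of_int (t + int tau))) * (ex (df * real_of_int (t + int tau)) * s t) = s t"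
    using ex_neg_cancel[of df "real_of_int (t + int tau)"] by (simp add: mult.assoc[symmetric])
  finally show "(cmod (s t - (\<Sum>l<L. exp (- \<i> * complex_of_real (2 * pi * df * of_int (t + int l))) *
        hinner (if l = tau then v else 0) (rx s ii h g K tau df (t + int l)))))\<^sup>2 = 0" by simp
qed

lemma frac_props:
  fixes a :: real
  assumes "a \<notin> \<int>"
  shows "a - of_int \<lfloor>a\<rfloor> \<in> {0<..<1}"
proof -
  have f: "of_int \<lfloor>a\<rfloor> \<le> a" "a < of_int \<lfloor>a\<rfloor> + 1" by linarith+
  have ne: "a \<noteq> of_int \<lfloor>a\<rfloor>" using assms by (metis Ints_of_int)
  from f ne have "of_int \<lfloor>a\<rfloor> < a" by (auto simp: less_le)
  then show ?thesis using f unfolding greaterThanLessThan_iff by linarith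
qed

lemma ex_frac: "ex ((a - of_int \<lfloor>a\<rfloor>) * real_of_int t) = ex (a * real_of_int t)"
proof -
  have "a * real_of_int t = (a - of_int \<lfloor>a\<rfloor>) * real_of_int t + of_int (\<lfloor>a\<rfloor> * t)"
    by (simp add: algebra_simps)
  then have "ex (a * real_of_int t) = ex ((a - of_int \<lfloor>a\<rfloor>) * real_of_int t) * ex (of_int (\<lfloor>a\<rfloor> * t))"
    by (metis ex_add)
  also have "ex (of_int (\<lfloor>a\<rfloor> * t)) = 1" by (intro ex_int) simp
  finally show ?thesis by simp
qed

lemma aux_alg: "(x::complex) + y + c * e * z * (-1) = 0 \<Longrightarrow> c = 1 \<Longrightarrow> (x - e * z) + y + q * e * z * 0 = 0"
  by (simp add: algebra_simps)

lemma main_det: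
  fixes h :: "complex ^ 'n" and g :: "nat \<Rightarrow> complex ^ 'n"
  assumes tau: "tau < L" and T: "K*L+L < T"
    and ind: "cindep_family (\<lambda>k. if k = 0 then h else g k) K"
    and dfO: "df \<in> Om" and OmZ: "\<forall>a\<in>Om. \<forall>b\<in>Om. a \<noteq> b \<longrightarrow> a - b \<notin> \<int>"
    and gen: "\<forall>th\<in>{0<..<1}. Determinant.det (AM (Suc (K*L+L)) (aal K L tau df) (uu K L tau) (yd s ii) th) \<noteq> 0"
  shows "(\<exists>om\<in>Om. \<exists>w. costF s (rx s ii h g K tau df) L T om w = 0
         \<and> (\<forall>om'\<in>Om. \<forall>w'. costF s (rx s ii h g K tau df) L T om w
                            \<le> costF s (rx s ii h g K tau df) L T om' w'))
   \<and> (\<forall>om\<in>Om. \<forall>w. costF s (rx s ii h g K tau df) L T om w = 0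
         \<longrightarrow> om = df \<and> w \<in> goodC h g K L tau)"
proof
  obtain v where v: "hinner h v = 1" "\<forall>k\<in>{1..K}. hinner (g k) v = 0"
    using dual_exists[OF ind] by blast
  have z: "costF s (rx s ii h g K tau df) L T df (\<lambda>l. if l = tau then v else 0) = 0"
    by (rule zero_cost_exists[OF tau v])
  show "\<exists>om\<in>Om. \<exists>w. costF s (rx s ii h g K tau df) L T om w = 0
         \<and> (\<forall>om'\<in>Om. \<forall>w'. costF s (rx s ii h g K tau df) L T om w
                            \<le> costF s (rx s ii h g K tau df) L T om' w')"
    using dfO z costF_nonneg by (intro bexI[of _ df] exI[of _ "\<lambda>l. if l = tau then v else 0"]) auto
next
  show "\<forall>om\<in>Om. \<forall>w. costF s (rx s ii h g K tau df) L T om w = 0 \<longrightarrow> om = df \<and> w \<in> goodC h g K L tau"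
  proof (intro ballI allI impI)
    fix om w assume om: "om \<in> Om" and c0: "costF s (rx s ii h g K tau df) L T om w = 0"
    let ?c = "\<lambda>l::nat. ex ((df - om) * l) * hinner (w l) h"
    let ?d = "\<lambda>(l::nat) k. ex (-(om * l)) * hinner (w l) (g k)"
    have E: "(\<Sum>l<L. ex (df * t) * s (t + int l - int tau) * ?c l)
       + (\<Sum>k\<in>{1..K}. \<Sum>l<L. ii k (t + int l) * ?d l k)
       + ex ((om - df) * t) * ex (df * t) * s t * (-1) = 0" if t: "t \<in> {1..int T}" for t
      by (rule eq_transform[OF costF_zeroD[OF c0 t]])
    have omdf: "om = df"
    proof (rule ccontr)
      assume ne: "om \<noteq> df"
      then have nZ: "om - df \<notin> \<int>" using OmZ om dfO by blast
      define th where "th = (om - df) - of_int \<lfloor>om - df\<rfloor>"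
      have th01: "th \<in> {0<..<1}" unfolding th_def by (rule frac_props[OF nZ])
      have "(-1::complex) = 0 \<and> (\<forall>l<L. ?c l = 0) \<and> (\<forall>k\<in>{1..K}. \<forall>l<L. ?d l k = 0)"
      proof (rule det_sys_zero[OF tau T gen[rule_format, OF th01]])
        fix t :: int assume t: "t \<in> {1..int T}"
        have "ex (th * t) = ex ((om - df) * t)" unfolding th_def by (rule ex_frac)
        then show "(\<Sum>l<L. ex (df * t) * s (t + int l - int tau) * ?c l)
           + (\<Sum>k\<in>{1..K}. \<Sum>l<L. ii k (t + int l) * ?d l k)
           + ex (th * t) * ex (df * t) * s t * (-1) = 0" using E[OF t] by simp
      qed
      then show False by simp
    qed
    let ?c' = "\<lambda>l. ?c l - (if l = tau then 1 else 0)"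
    have half: "(1/2::real) \<in> {0<..<1}" by simp
    have res: "(0::complex) = 0 \<and> (\<forall>l<L. ?c' l = 0) \<and> (\<forall>k\<in>{1..K}. \<forall>l<L. ?d l k = 0)"
    proof (rule det_sys_zero[OF tau T gen[rule_format, OF half]])
      fix t :: int assume t: "t \<in> {1..int T}"
      have sp: "(\<Sum>l<L. ex (df * t) * s (t + int l - int tau) * ?c' l)
          = (\<Sum>l<L. ex (df * t) * s (t + int l - int tau) * ?c l) - ex (df * t) * s t"
      proof -
        let ?F = "\<lambda>l::nat. ex (df * t) * s (t + int l - int tau)"
        have "(\<Sum>l<L. ?F l * ?c' l) = (\<Sum>l<L. ?F l * ?c l - (if l = tau then ?F l else 0))"
          by (intro sum.cong refl) (simp add: right_diff_distrib)
        also have "\<dots> = (\<Sum>l<L. ?F l * ?c l) - (\<Sum>l<L. if l = tau then ?F l else 0)"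
          by (rule sum_subtractf)
        also have "(\<Sum>l<L. if l = tau then ?F l else 0) = ?F tau"
          using tau by (simp add: sum.delta)
        also have "?F tau = ex (df * t) * s t" by simp
        finally show ?thesis .
      qed
      show "(\<Sum>l<L. ex (df * t) * s (t + int l - int tau) * ?c' l)
           + (\<Sum>k\<in>{1..K}. \<Sum>l<L. ii k (t + int l) * ?d l k)
           + ex ((1/2) * t) * ex (df * t) * s t * 0 = 0"
        unfolding sp by (rule aux_alg[OF E[OF t]]) (simp add: omdf)
    qed
    have a: "hinner (w l) h = (if l = tau then 1 else 0)" if "l < L" for l
      using res that omdf by (auto split: if_splits)
    have b: "hinner (w l) (g k) = 0" if "l < L" "k \<in> {1..K}" for l k
      using res that by simp
    show "om = df \<and> w \<in> goodC h g K L tau"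
      unfolding goodC_def using omdf a b tau hinner_cnj
      by (auto simp: hinner_cnj[of h] hinner_cnj[of "g _"])
  qed
qed

lemma AM_cong:
  assumes "\<And>i j. i < n \<Longrightarrow> j < n \<Longrightarrow> y (u i j) = y' (u i j)"
  shows "AM n al u y th = AM n al u y' th"
  by (rule eq_matI) (auto simp: assms)

theorem theorem1:
  fixes M :: "'w measure"
    and S :: "'w \<Rightarrow> int \<Rightarrow> complex"
    and I :: "'w \<Rightarrow> nat \<Rightarrow> int \<Rightarrow> complex"
    and h :: "complex ^ 'n"
    and g :: "nat \<Rightarrow> complex ^ 'n"
    and K L T tau :: nat
    and df :: real
    and Om :: "real set"
  assumes "prob_space M"
    and "K \<ge> 1" and "L \<ge> 1" and "T \<ge> 1"
    and "CARD('n) \<ge> K + 1"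
    and "tau < L"
    and "cindep_family (\<lambda>k. if k = 0 then h else g k) K"
    and "\<forall>k t. (\<lambda>x. proc S I x k t) \<in> borel_measurable M"
    and "prob_space.indep_vars M (\<lambda>_. PiM UNIV (\<lambda>_. borel :: complex measure))
           (\<lambda>k x. proc S I x k) {0..K}"
    and "jointly_continuous M (proc S I) {0..K}"
    and "df \<in> Om"
    and "\<forall>a\<in>Om. \<forall>b\<in>Om. a \<noteq> b \<longrightarrow> a - b \<notin> \<int>"
    and "T > (K + 1) * L"
  shows "AE x in M.
     (\<exists>om\<in>Om. \<exists>w. costF (S x) (rx (S x) (I x) h g K tau df) L T om w = 0
         \<and> (\<forall>om'\<in>Om. \<forall>w'. costF (S x) (rx (S x) (I x) h g K tau df) L T om w
                            \<le> costF (S x) (rx (S x) (I x) h g K tau df) L T om' w'))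
   \<and> (\<forall>om\<in>Om. \<forall>w. costF (S x) (rx (S x) (I x) h g K tau df) L T om w = 0
         \<longrightarrow> om = df \<and> w \<in> goodC h g K L tau)"
proof -
  note K1 = assms(2) and L1 = assms(3) and tau = assms(6) and ind = assms(7) and meas = assms(8)
    and jc = assms(10) and dfO = assms(11) and OmZ = assms(12)
  have T: "K*L+L < T" using assms(13) by (simp add: algebra_simps)
  define N where "N = Suc (K*L+L)"
  define J0 where "J0 = (\<lambda>(i,j). uu K L tau i j) ` ({..<N} \<times> {..<N})"
  have finJ0: "finite J0" unfolding J0_def by simp
  have uJ0: "\<forall>i<N. \<forall>j<N. uu K L tau i j \<in> J0" unfolding J0_def by auto
  have J0sub: "J0 \<subseteq> {0..K} \<times> UNIV"
    unfolding J0_def using kk_range[OF K1 L1] by (auto simp: uu_def)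
  define B where "B = badset J0 N (aal K L tau df) (uu K L tau)"
  have Bnull: "B \<in> null_sets (PiM J0 (\<lambda>_. lborel :: complex measure))"
    using generic_OK[OF tau, of K df] finJ0 uJ0 unfolding OKn_def B_def N_def by blast
  define dat where "dat x = (\<lambda>j\<in>J0. proc S I x (fst j) (snd j))" for x
  have dat_meas: "dat \<in> measurable M (PiM J0 (\<lambda>_. borel :: complex measure))"
    unfolding dat_def by (rule measurable_restrict) (use meas in auto)
  have ac: "absolutely_continuous (PiM J0 (\<lambda>_. lborel :: complex measure))
              (distr M (PiM J0 (\<lambda>_. borel :: complex measure)) dat)"
    using jc finJ0 J0sub unfolding jointly_continuous_def dat_def by blast
  then have Bnull2: "B \<in> null_sets (distr M (PiM J0 (\<lambda>_. borel :: complex measure)) dat)"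
    using Bnull unfolding absolutely_continuous_def by blast
  have Bsets: "B \<in> sets (PiM J0 (\<lambda>_. borel :: complex measure))"
    using null_setsD2[OF Bnull2] by simp
  have "emeasure M (dat -` B \<inter> space M) = emeasure (distr M (PiM J0 (\<lambda>_. borel :: complex measure)) dat) B"
    by (rule emeasure_distr[OF dat_meas Bsets, symmetric])
  also have "\<dots> = 0" using null_setsD1[OF Bnull2] .
  finally have N0: "dat -` B \<inter> space M \<in> null_sets M"
    using measurable_sets[OF dat_meas Bsets] by (intro null_setsI) auto
  show ?thesis
  proof (rule AE_I'[OF N0], rule subsetI)
    fix x assume xx: "x \<in> {x \<in> space M. \<not> ((\<exists>om\<in>Om. \<exists>w. costF (S x) (rx (S x) (I x) h g K tau df) L T om w = 0
         \<and> (\<forall>om'\<in>Om. \<forall>w'. costF (S x) (rx (S x) (I x) h g K tau df) L T om w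
                            \<le> costF (S x) (rx (S x) (I x) h g K tau df) L T om' w'))
   \<and> (\<forall>om\<in>Om. \<forall>w. costF (S x) (rx (S x) (I x) h g K tau df) L T om w = 0
         \<longrightarrow> om = df \<and> w \<in> goodC h g K L tau))}"
    then have xM: "x \<in> space M" by blast
    show "x \<in> dat -` B \<inter> space M"
    proof (rule ccontr)
      assume "x \<notin> dat -` B \<inter> space M"
      then have notB: "dat x \<notin> B" using xM by blast
      have dsp: "dat x \<in> space (PiM J0 (\<lambda>_. lborel :: complex measure))"
        unfolding dat_def by (simp add: space_PiM)
      have eqAM: "AM N (aal K L tau df) (uu K L tau) (dat x) th = AM N (aal K L tau df) (uu K L tau) (yd (S x) (I x)) th" for th
      proof (rule AM_cong)
        fix i j assume "i < N" "j < N"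
        then have "uu K L tau i j \<in> J0" using uJ0 by auto
        then show "dat x (uu K L tau i j) = yd (S x) (I x) (uu K L tau i j)"
          unfolding dat_def by (simp add: yd_def proc_def)
      qed
      have gen: "\<forall>th\<in>{0<..<1}. Determinant.det (AM (Suc (K*L+L)) (aal K L tau df) (uu K L tau) (yd (S x) (I x)) th) \<noteq> 0"
        using notB dsp eqAM unfolding B_def badset_def N_def by auto
      note md = main_det[OF tau T ind dfO OmZ gen]
      then show False using xx by blast
    qed
  qed
qed

end
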